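(* Let $f:\mathcal C_n\to\mathbb R$, let $\xi$ be a product probability measure on $\mathcal C_n$, and let $Y\sim\xi$. Then $$\mathbb E|f(Y)-f(\mathbb EY)|\le\sqrt n\,\mathrm{Lip}(f),$$ where $f(\mathbb EY)$ uses the harmonic extension of $f$ to $[-1,1]^n$.
   Context: Notation. $\mathcal C_n=\{-1,1\}^n$. Definitions. $\partial_if(y)=\tfrac12\big(f(y^{i\to1})-f(y^{i\to-1})\big)$, where $y^{i\to\pm1}$ is $y$ with its $i$-th coordinate set to $\pm1$, and $\mathrm{Lip}(f)=\max_{i,y}|\partial_if(y)|$. The harmonic extension of $f$ to $[-1,1]^n$ is its unique multilinear polynomial $\sum_S\hat f(S)\prod_{i\in S}x_i$. *)

theory Defs
  imports "HOL-Probability.Probability"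
begin

text \<open>Points of \<open>\<real>^n\<close> are represented as functions \<open>nat \<Rightarrow> real\<close> that vanish
  outside \<open>{..<n}\<close>. The discrete cube \<open>C_n = {-1,1}^n\<close>:\<close>
definition cube :: "nat \<Rightarrow> (nat \<Rightarrow> real) set" where
  "cube n = {y. (\<forall>i<n. y i = 1 \<or> y i = -1) \<and> (\<forall>i\<ge>n. y i = 0)}"

definition dpart :: "nat \<Rightarrow> ((nat \<Rightarrow> real) \<Rightarrow> real) \<Rightarrow> (nat \<Rightarrow> real) \<Rightarrow> real" where
  "dpart i f y = (f (y(i := 1)) - f (y(i := -1))) / 2"

definition Lip :: "nat \<Rightarrow> ((nat \<Rightarrow> real) \<Rightarrow> real) \<Rightarrow> real" where
  "Lip n f = Max {\<bar>dpart i f y\<bar> | i y. i < n \<and> y \<in> cube n}"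

definition fourier :: "nat \<Rightarrow> ((nat \<Rightarrow> real) \<Rightarrow> real) \<Rightarrow> nat set \<Rightarrow> real" where
  "fourier n f S = (\<Sum>y\<in>cube n. f y * (\<Prod>i\<in>S. y i)) / 2 ^ n"

definition harm_ext :: "nat \<Rightarrow> ((nat \<Rightarrow> real) \<Rightarrow> real) \<Rightarrow> (nat \<Rightarrow> real) \<Rightarrow> real" where
  "harm_ext n f x = (\<Sum>S\<in>Pow {..<n}. fourier n f S * (\<Prod>i\<in>S. x i))"

definition product_measure_on_cube :: "nat \<Rightarrow> (nat \<Rightarrow> real) pmf \<Rightarrow> bool" where
  "product_measure_on_cube n \<xi> \<longleftrightarrow> set_pmf \<xi> \<subseteq> cube n \<and>
     (\<forall>y\<in>cube n. pmf \<xi> y = (\<Prod>i<n. measure_pmf.prob \<xi> {z. z i = y i}))"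

end

theory Submission
  imports Defs
begin

definition qq :: "(nat \<Rightarrow> real) \<Rightarrow> nat \<Rightarrow> real \<Rightarrow> real" where
  "qq p i s = (if s = 1 then p i else 1 - p i)"

definition WW :: "(nat \<Rightarrow> real) \<Rightarrow> nat \<Rightarrow> (nat \<Rightarrow> real) \<Rightarrow> real" where
  "WW p n y = (\<Prod>i<n. qq p i (y i))"

lemma cube_0: "cube 0 = {\<lambda>_. 0}"
  by (auto simp: cube_def)

lemma cube_Suc: "cube (Suc n) = (\<lambda>y. y(n:=1)) ` cube n \<union> (\<lambda>y. y(n:=-1)) ` cube n"
proof
  show "cube (Suc n) \<subseteq> (\<lambda>y. y(n:=1)) ` cube n \<union> (\<lambda>y. y(n:=-1)) ` cube n"
  proof
    fix z assume z: "z \<in> cube (Suc n)"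
    have c: "z(n:=0) \<in> cube n" using z by (auto simp: cube_def less_Suc_eq)
    have "z n = 1 \<or> z n = -1" using z by (auto simp: cube_def)
    moreover have "z = (z(n:=0))(n := z n)" by simp
    ultimately show "z \<in> (\<lambda>y. y(n:=1)) ` cube n \<union> (\<lambda>y. y(n:=-1)) ` cube n"
      using c by (metis UnI1 UnI2 image_eqI)
  qed
next
  show "(\<lambda>y. y(n:=1)) ` cube n \<union> (\<lambda>y. y(n:=-1)) ` cube n \<subseteq> cube (Suc n)"
    by (auto simp: cube_def less_Suc_eq)
qed

lemma finite_cube: "finite (cube n)"
  by (induction n) (auto simp: cube_0 cube_Suc)

lemma inj_upd: "inj_on (\<lambda>y. y(n:=s)) (cube n)"
proof (rule inj_onI)
  fix x y assume "x \<in> cube n" "y \<in> cube n" "x(n:=s) = y(n:=s)"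
  then have "(x(n:=s))(n:=0) = (y(n:=s))(n:=0)" "x n = 0" "y n = 0" by (auto simp: cube_def)
  then show "x = y" by (metis fun_upd_triv fun_upd_upd)
qed

lemma sum_cube_Suc:
  "(\<Sum>z\<in>cube (Suc n). h z) = (\<Sum>y\<in>cube n. h (y(n:=1)) + h (y(n:=-1)))"
proof -
  have d: "(\<lambda>y. y(n:=1)) ` cube n \<inter> (\<lambda>y. y(n:=-1)) ` cube n = {}"
    by (auto dest: fun_cong[where x=n])
  have "(\<Sum>z\<in>cube (Suc n). h z) = (\<Sum>z\<in>(\<lambda>y. y(n:=1)) ` cube n. h z) + (\<Sum>z\<in>(\<lambda>y. y(n:=-1)) ` cube n. h z)"
    unfolding cube_Suc by (rule sum.union_disjoint) (auto simp: finite_cube d)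
  also have "\<dots> = (\<Sum>y\<in>cube n. h (y(n:=1))) + (\<Sum>y\<in>cube n. h (y(n:=-1)))"
    by (simp add: sum.reindex inj_upd)
  finally show ?thesis by (simp add: sum.distrib)
qed

lemma WW_upd: "y \<in> cube n \<Longrightarrow> WW p (Suc n) (y(n:=s)) = WW p n y * qq p n s"
  by (simp add: WW_def)

lemma sumW: "(\<Sum>y\<in>cube n. WW p n y) = 1"
proof (induction n)
  case 0 then show ?case by (simp add: cube_0 WW_def)
next
  case (Suc n)
  have "(\<Sum>y\<in>cube (Suc n). WW p (Suc n) y) = (\<Sum>y\<in>cube n. WW p n y * (qq p n 1 + qq p n (-1)))"
    unfolding sum_cube_Suc by (rule sum.cong) (auto simp: WW_upd algebra_simps)
  also have "\<dots> = 1" using Suc by (simp add: qq_def sum_distrib_right[symmetric])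
  finally show ?case .
qed

lemma WW_nonneg: "(\<And>i. 0 \<le> p i \<and> p i \<le> 1) \<Longrightarrow> 0 \<le> WW p n y"
  unfolding WW_def qq_def by (rule prod_nonneg) (auto simp: diff_ge_0_iff_ge)

lemma meanW: "i < n \<Longrightarrow> (\<Sum>y\<in>cube n. WW p n y * y i) = 2 * p i - 1"
proof (induction n)
  case 0 then show ?case by simp
next
  case (Suc n)
  have "(\<Sum>y\<in>cube (Suc n). WW p (Suc n) y * y i)
     = (\<Sum>y\<in>cube n. WW p n y * (qq p n 1 * (y(n:=1)) i + qq p n (-1) * (y(n:=-1)) i))"
    unfolding sum_cube_Suc by (rule sum.cong) (auto simp: WW_upd algebra_simps)
  also have "\<dots> = 2 * p i - 1"
  proof (cases "i = n")
    case True
    have "(\<Sum>y\<in>cube n. WW p n y * (qq p n 1 * (y(n:=1)) i + qq p n (-1) * (y(n:=-1)) i))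
       = (\<Sum>y\<in>cube n. WW p n y * (2 * p n - 1))"
      using True by (intro sum.cong) (auto simp: qq_def algebra_simps)
    also have "\<dots> = 2 * p n - 1" by (simp add: sum_distrib_right[symmetric] sumW)
    finally show ?thesis using True by simp
  next
    case False
    then have "i < n" using Suc by simp
    have "(\<Sum>y\<in>cube n. WW p n y * (qq p n 1 * (y(n:=1)) i + qq p n (-1) * (y(n:=-1)) i))
       = (\<Sum>y\<in>cube n. WW p n y * y i)"
      using False by (intro sum.cong) (auto simp: qq_def algebra_simps)
    then show ?thesis using Suc.IH[OF \<open>i<n\<close>] by simp
  qed
  finally show ?case .
qed

lemma cube_upd1: "y \<in> cube n \<Longrightarrow> i < n \<Longrightarrow> (s = 1 \<or> s = -1) \<Longrightarrow> y(i:=s) \<in> cube n"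
  by (auto simp: cube_def)

lemma cube_upd2: "y \<in> cube n \<Longrightarrow> (s = 1 \<or> s = -1) \<Longrightarrow> y(n:=s) \<in> cube (Suc n)"
  unfolding cube_Suc by auto

lemma varW:
  assumes p: "\<And>i. 0 \<le> p i \<and> p i \<le> 1"
  shows "(\<forall>i<n. \<forall>y\<in>cube n. \<bar>f (y(i:=1)) - f (y(i:=-1))\<bar> \<le> 2 * L) \<Longrightarrow>
     (\<Sum>y\<in>cube n. WW p n y * (f y)^2) \<le> (\<Sum>y\<in>cube n. WW p n y * f y)^2 + n * L^2"
proof (induction n arbitrary: f)
  case 0 then show ?case by (simp add: cube_0 WW_def)
next
  case (Suc n)
  define a where "a = p n"
  define g where "g y = a * f (y(n:=1)) + (1 - a) * f (y(n:=-1))" for y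
  have a: "0 \<le> a" "a \<le> 1" using p a_def by auto
  have qa: "qq p n 1 = a" "qq p n (-1) = 1 - a" by (auto simp: qq_def a_def)
  have e1: "(\<Sum>y\<in>cube (Suc n). WW p (Suc n) y * f y) = (\<Sum>y\<in>cube n. WW p n y * g y)"
    unfolding sum_cube_Suc by (rule sum.cong) (auto simp: WW_upd qa g_def algebra_simps)
  have e2: "(\<Sum>y\<in>cube (Suc n). WW p (Suc n) y * (f y)^2)
     = (\<Sum>y\<in>cube n. WW p n y * (a * (f (y(n:=1)))^2 + (1-a) * (f (y(n:=-1)))^2))"
    unfolding sum_cube_Suc by (rule sum.cong) (auto simp: WW_upd qa algebra_simps)
  have pt: "a * (f (y(n:=1)))^2 + (1-a) * (f (y(n:=-1)))^2 \<le> (g y)^2 + L^2" if y: "y \<in> cube n" for y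
  proof -
    define d where "d = f (y(n:=1)) - f (y(n:=-1))"
    have "\<forall>z\<in>cube (Suc n). \<bar>f (z(n:=1)) - f (z(n:=-1))\<bar> \<le> 2 * L"
      using Suc.prems by blast
    then have "\<bar>f ((y(n:=1))(n:=1)) - f ((y(n:=1))(n:=-1))\<bar> \<le> 2 * L"
      using cube_upd2[OF y, of 1] by blast
    then have dd: "\<bar>d\<bar> \<le> 2 * L" by (simp add: d_def)
    then have "d^2 \<le> (2*L)^2"
      by (metis abs_ge_zero le_trans power2_abs power_mono)
    moreover have "a * (1 - a) \<le> 1/4" proof -
      have "0 \<le> (a - 1/2)^2" by simp
      moreover have "a * (1 - a) = 1/4 - (a - 1/2)^2" by (simp add: power2_eq_square algebra_simps)
      ultimately show ?thesis by linarith
    qed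
    moreover have "0 \<le> a * (1-a)" using a by simp
    ultimately have "a * (1-a) * d^2 \<le> 1/4 * (2*L)^2"
      by (intro mult_mono) auto
    moreover have "a * (f (y(n:=1)))^2 + (1-a) * (f (y(n:=-1)))^2 = (g y)^2 + a*(1-a)*d^2"
      by (simp add: g_def d_def power2_eq_square algebra_simps)
    ultimately show ?thesis by (simp add: power2_eq_square)
  qed
  have glip: "\<forall>i<n. \<forall>y\<in>cube n. \<bar>g (y(i:=1)) - g (y(i:=-1))\<bar> \<le> 2 * L"
  proof (intro allI impI ballI)
    fix i y assume i: "i < n" and y: "y \<in> cube n"
    have h1: "\<bar>f ((y(n:=s))(i:=1)) - f ((y(n:=s))(i:=-1))\<bar> \<le> 2 * L" if "s = 1 \<or> s = -1" for s
    proof -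
      have "i < Suc n" using i by simp
      then have "\<forall>z\<in>cube (Suc n). \<bar>f (z(i:=1)) - f (z(i:=-1))\<bar> \<le> 2 * L"
        using Suc.prems by blast
      then show ?thesis using cube_upd2[OF y that] by blast
    qed
    have tw: "(y(i:=t))(n:=s) = (y(n:=s))(i:=t)" for s t using i by (simp add: fun_upd_twist)
    define d1 where "d1 = f ((y(n:=1))(i:=1)) - f ((y(n:=1))(i:=-1))"
    define d0 where "d0 = f ((y(n:=-1))(i:=1)) - f ((y(n:=-1))(i:=-1))"
    have "g (y(i:=1)) - g (y(i:=-1)) = a * d1 + (1-a) * d0"
      by (simp add: g_def tw d1_def d0_def algebra_simps)
    moreover have "\<bar>a * d1 + (1-a) * d0\<bar> \<le> a * \<bar>d1\<bar> + (1-a) * \<bar>d0\<bar>"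
      using a by (metis abs_mult abs_of_nonneg abs_triangle_ineq diff_ge_0_iff_ge)
    moreover have "a * \<bar>d1\<bar> \<le> a * (2*L)" "(1-a) * \<bar>d0\<bar> \<le> (1-a) * (2*L)"
      using h1[of 1] h1[of "-1"] a unfolding d1_def d0_def by (auto intro: mult_left_mono)
    ultimately show "\<bar>g (y(i:=1)) - g (y(i:=-1))\<bar> \<le> 2 * L" by (simp add: algebra_simps)
  qed
  have "(\<Sum>y\<in>cube (Suc n). WW p (Suc n) y * (f y)^2) \<le> (\<Sum>y\<in>cube n. WW p n y * ((g y)^2 + L^2))"
    unfolding e2 by (intro sum_mono mult_left_mono pt WW_nonneg p)
  also have "\<dots> = (\<Sum>y\<in>cube n. WW p n y * (g y)^2) + L^2"
    by (simp add: distrib_left sum.distrib sum_distrib_right[symmetric] sumW)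
  also have "\<dots> \<le> (\<Sum>y\<in>cube n. WW p n y * g y)^2 + n * L^2 + L^2"
    using Suc.IH[OF glip] by simp
  finally show ?case unfolding e1 by (simp add: algebra_simps)
qed

lemma sq_expand:
  fixes W g :: "'b \<Rightarrow> real"
  shows "(\<Sum>y\<in>A. W y * (g y - c)^2) = (\<Sum>y\<in>A. W y * (g y)^2) - 2*c*(\<Sum>y\<in>A. W y * g y) + c^2 * (\<Sum>y\<in>A. W y)"
proof -
  have "(\<Sum>y\<in>A. W y * (g y - c)^2) = (\<Sum>y\<in>A. W y * (g y)^2 - (2*c) * (W y * g y) + c^2 * W y)"
    by (rule sum.cong) (auto simp: power2_eq_square algebra_simps)
  then show ?thesis by (simp add: sum.distrib sum_subtractf sum_distrib_left)
qed

lemma Lip_ge: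
  assumes "i < n" "y \<in> cube n"
  shows "\<bar>dpart i f y\<bar> \<le> Lip n f"
proof -
  have "{\<bar>dpart i f y\<bar> | i y. i < n \<and> y \<in> cube n} \<subseteq> (\<lambda>(i,y). \<bar>dpart i f y\<bar>) ` ({..<n} \<times> cube n)"
    by auto
  then have "finite {\<bar>dpart i f y\<bar> | i y. i < n \<and> y \<in> cube n}"
    by (rule finite_subset) (simp add: finite_cube)
  then show ?thesis unfolding Lip_def by (rule Max_ge) (use assms in blast)
qed

theorem mainTheorem13:
  fixes n :: nat and f :: "(nat \<Rightarrow> real) \<Rightarrow> real" and \<xi> :: "(nat \<Rightarrow> real) pmf"
  assumes "product_measure_on_cube n \<xi>"
  shows "measure_pmf.expectation \<xi>
           (\<lambda>y. \<bar>f y - harm_ext n f (\<lambda>i. measure_pmf.expectation \<xi> (\<lambda>z. z i))\<bar>)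
         \<le> sqrt n * Lip n f"
proof -
  define p where "p i = measure_pmf.prob \<xi> {z. z i = 1}" for i
  have sup: "set_pmf \<xi> \<subseteq> cube n" and pe: "\<And>y. y \<in> cube n \<Longrightarrow> pmf \<xi> y = (\<Prod>i<n. measure_pmf.prob \<xi> {z. z i = y i})"
    using assms unfolding product_measure_on_cube_def by auto
  have pb: "0 \<le> p i \<and> p i \<le> 1" for i unfolding p_def by simp
  have neg: "measure_pmf.prob \<xi> {z. z i = -1} = 1 - p i" if i: "i < n" for i
  proof -
    have "{z. z i = -1} \<inter> set_pmf \<xi> = (UNIV - {z. z i = 1}) \<inter> set_pmf \<xi>"
      using sup i by (auto simp: cube_def)
    then have "measure_pmf.prob \<xi> {z. z i = -1} = measure_pmf.prob \<xi> (UNIV - {z. z i = 1})"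
      by (metis measure_Int_set_pmf)
    also have "\<dots> = 1 - p i" unfolding p_def
      using measure_pmf.prob_compl[of "{z. z i = 1}" \<xi>] by simp
    finally show ?thesis .
  qed
  have pmfW: "pmf \<xi> y = WW p n y" if y: "y \<in> cube n" for y
    unfolding pe[OF y] WW_def
  proof (rule prod.cong)
    fix i assume "i \<in> {..<n}"
    then have i: "i < n" by simp
    then have "y i = 1 \<or> y i = -1" using y by (auto simp: cube_def)
    then show "measure_pmf.prob \<xi> {z. z i = y i} = qq p i (y i)"
      using neg[OF i] by (auto simp: qq_def p_def)
  qed simp
  have E: "measure_pmf.expectation \<xi> g = (\<Sum>y\<in>cube n. WW p n y * g y)" for g :: "_ \<Rightarrow> real"
    by (subst integral_measure_pmf[of "cube n"]) (use sup finite_cube pmfW in auto)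
  define \<mu> where "\<mu> = (\<lambda>i. measure_pmf.expectation \<xi> (\<lambda>z. z i))"
  have mu: "\<mu> i = 2 * p i - 1" if "i < n" for i
    unfolding \<mu>_def E using meanW[OF that, of p] by simp
  define m where "m = (\<Sum>y\<in>cube n. WW p n y * f y)"
  have hy: "(\<Sum>S\<in>Pow {..<n}. \<Prod>i\<in>S. y i * \<mu> i) = 2^n * WW p n y" if y: "y \<in> cube n" for y
  proof -
    have "(\<Sum>S\<in>Pow {..<n}. \<Prod>i\<in>S. y i * \<mu> i) = (\<Sum>S\<in>Pow {..<n}. (\<Prod>i\<in>S. y i * \<mu> i) * (\<Prod>i\<in>{..<n}-S. 1))"
      by simp
    also have "\<dots> = (\<Prod>i<n. y i * \<mu> i + 1)"
      by (rule prod_add[symmetric]) simp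
    also have "\<dots> = (\<Prod>i<n. 2 * qq p i (y i))"
    proof (rule prod.cong)
      fix i assume "i \<in> {..<n}"
      then have i: "i < n" by simp
      then have "y i = 1 \<or> y i = -1" using y by (auto simp: cube_def)
      then show "y i * \<mu> i + 1 = 2 * qq p i (y i)" using mu[OF i] by (auto simp: qq_def)
    qed simp
    also have "\<dots> = 2^n * WW p n y" by (simp add: prod.distrib WW_def)
    finally show ?thesis .
  qed
  have harm: "harm_ext n f \<mu> = m"
  proof -
    have "harm_ext n f \<mu> = (\<Sum>S\<in>Pow {..<n}. \<Sum>y\<in>cube n. f y * (\<Prod>i\<in>S. y i * \<mu> i) / 2^n)"
      unfolding harm_ext_def fourier_def
      by (rule sum.cong) (auto simp: sum_divide_distrib sum_distrib_right prod.distrib intro!: sum.cong)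
    also have "\<dots> = (\<Sum>y\<in>cube n. \<Sum>S\<in>Pow {..<n}. f y * (\<Prod>i\<in>S. y i * \<mu> i) / 2^n)"
      by (rule sum.swap)
    also have "\<dots> = (\<Sum>y\<in>cube n. f y * (\<Sum>S\<in>Pow {..<n}. \<Prod>i\<in>S. y i * \<mu> i) / 2^n)"
      by (simp add: sum_divide_distrib sum_distrib_left)
    also have "\<dots> = m" unfolding m_def by (rule sum.cong) (auto simp: hy)
    finally show ?thesis .
  qed
  define L where "L = Lip n f"
  have lip: "\<forall>i<n. \<forall>y\<in>cube n. \<bar>f (y(i:=1)) - f (y(i:=-1))\<bar> \<le> 2 * L"
  proof (intro allI impI ballI)
    fix i y assume "i < n" "y \<in> cube n"
    then have "\<bar>dpart i f y\<bar> \<le> L" unfolding L_def by (rule Lip_ge)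
    moreover have "\<bar>f (y(i:=1)) - f (y(i:=-1))\<bar> = 2 * \<bar>dpart i f y\<bar>" by (simp add: dpart_def)
    ultimately show "\<bar>f (y(i:=1)) - f (y(i:=-1))\<bar> \<le> 2 * L" by simp
  qed
  have v1: "(\<Sum>y\<in>cube n. WW p n y * (f y)^2) \<le> m^2 + n * L^2"
    using varW[OF pb lip] unfolding m_def by simp
  have v2: "(\<Sum>y\<in>cube n. WW p n y * (f y - m)^2) \<le> n * L^2"
    using v1 sq_expand[of "WW p n" f m "cube n"] unfolding m_def[symmetric]
    by (simp add: sumW power2_eq_square)
  define e where "e = (\<Sum>y\<in>cube n. WW p n y * \<bar>f y - m\<bar>)"
  have "0 \<le> (\<Sum>y\<in>cube n. WW p n y * (\<bar>f y - m\<bar> - e)^2)"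
    by (intro sum_nonneg mult_nonneg_nonneg WW_nonneg pb) simp
  also have "\<dots> = (\<Sum>y\<in>cube n. WW p n y * (f y - m)^2) - e^2"
    using sq_expand[of "WW p n" "\<lambda>y. \<bar>f y - m\<bar>" e "cube n"] unfolding e_def[symmetric]
    by (simp add: sumW power2_eq_square)
  finally have e2: "e^2 \<le> n * L^2" using v2 by simp
  have lhs: "measure_pmf.expectation \<xi> (\<lambda>y. \<bar>f y - harm_ext n f \<mu>\<bar>) = e"
    unfolding E harm e_def ..
  have "e \<le> sqrt (n * L^2)" by (rule real_le_rsqrt) (use e2 in simp)
  also have "\<dots> = sqrt n * \<bar>L\<bar>" by (simp add: real_sqrt_mult)
  also have "\<dots> = sqrt n * L"
  proof (cases "n = 0")
    case False
    define y0 where "y0 = (\<lambda>i. if i < n then 1 else 0::real)"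
    have "y0 \<in> cube n" by (auto simp: y0_def cube_def)
    then have "0 \<le> L" using Lip_ge[of 0 n y0 f] False unfolding L_def by linarith
    then show ?thesis by simp
  qed simp
  finally have "e \<le> sqrt n * L" .
  then show ?thesis using lhs unfolding \<mu>_def L_def by linarith
qed

end
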